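(* Let $\Gamma$ be a finite graph with $m$ vertices endowed with a total order $\prec$ on $V(\Gamma)$, let $p:\tilde\Gamma\to\Gamma$ be a covering, and let $F$ be a finite nonempty subset of $V(\tilde\Gamma)$. Then there exists an induced subgraph $\Lambda$ of $\tilde\Gamma$ with $|V(\Lambda)|\leqslant|F|\cdot2^{m-1}$ such that $\phi=p|_\Lambda:\Lambda\to\Gamma$ has SIPL for $F$ (with respect to $\prec$). Furthermore, if the induced subgraph of $\tilde\Gamma$ on $F$ is connected, then $\Lambda$ can be chosen to be connected.
   Context: All graphs are undirected and simplicial ($\tilde\Gamma$ may be infinite). A map of graphs sends vertices to vertices and adjacent vertices to adjacent vertices. A covering $p:\tilde\Gamma\to\Gamma$ is a surjective map of graphs whose restriction to the set of neighbours of each vertex $v'$ is a bijection onto the set of neighbours of $p(v')$. A path in $\Gamma$ is a tuple $(v_0,\dots,v_k)$ of pairwise distinct vertices with $\{v_i,v_{i+1}\}$ an edge for all $i$; it is semi-induced (w.r.t. $\prec$) if $\{v_i,v_j\}$ is not an edge whenever $j\ge i+2$ and $v_j\prec v_{i+1}$. For a map of graphs $\phi:\Lambda\to\Gamma$, a lift of $(v_0,\dots,v_k)$ is a path $(v_0',\dots,v_k')$ in $\Lambda$ with $\phi(v_i')=v_i$. $\phi$ has SIPL for $F\subseteq V(\Lambda)$ if for each $v'\in F$ every semi-induced path in $\Gamma$ starting at $\phi(v')$ has a lift to $\Lambda$ starting at $v'$. *)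

theory Defs
  imports Main
begin

definition graph :: "'a set \<Rightarrow> ('a \<Rightarrow> 'a \<Rightarrow> bool) \<Rightarrow> bool" where
  "graph V E \<longleftrightarrow> (\<forall>u v. E u v \<longrightarrow> u \<in> V \<and> v \<in> V) \<and>
                  (\<forall>u v. E u v \<longrightarrow> E v u) \<and> (\<forall>v. \<not> E v v)"

definition neighbours :: "('a \<Rightarrow> 'a \<Rightarrow> bool) \<Rightarrow> 'a \<Rightarrow> 'a set" where
  "neighbours E v = {u. E v u}"

definition graph_map ::
  "'b set \<Rightarrow> ('b \<Rightarrow> 'b \<Rightarrow> bool) \<Rightarrow> 'a set \<Rightarrow> ('a \<Rightarrow> 'a \<Rightarrow> bool) \<Rightarrow> ('b \<Rightarrow> 'a) \<Rightarrow> bool" where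
  "graph_map V' E' V E f \<longleftrightarrow> f ` V' \<subseteq> V \<and> (\<forall>u v. E' u v \<longrightarrow> E (f u) (f v))"

definition covering ::
  "'b set \<Rightarrow> ('b \<Rightarrow> 'b \<Rightarrow> bool) \<Rightarrow> 'a set \<Rightarrow> ('a \<Rightarrow> 'a \<Rightarrow> bool) \<Rightarrow> ('b \<Rightarrow> 'a) \<Rightarrow> bool" where
  "covering V' E' V E p \<longleftrightarrow> graph_map V' E' V E p \<and> p ` V' = V \<and>
     (\<forall>v\<in>V'. bij_betw p (neighbours E' v) (neighbours E (p v)))"

definition is_path :: "'a set \<Rightarrow> ('a \<Rightarrow> 'a \<Rightarrow> bool) \<Rightarrow> 'a list \<Rightarrow> bool" where
  "is_path V E xs \<longleftrightarrow> xs \<noteq> [] \<and> set xs \<subseteq> V \<and> distinct xs \<and>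
     (\<forall>i. Suc i < length xs \<longrightarrow> E (xs ! i) (xs ! Suc i))"

definition semi_induced :: "'a set \<Rightarrow> ('a \<Rightarrow> 'a \<Rightarrow> bool) \<Rightarrow> ('a \<Rightarrow> 'a \<Rightarrow> bool) \<Rightarrow> 'a list \<Rightarrow> bool" where
  "semi_induced V E lt xs \<longleftrightarrow> is_path V E xs \<and>
     (\<forall>i j. j < length xs \<longrightarrow> i + 2 \<le> j \<longrightarrow> lt (xs ! j) (xs ! Suc i) \<longrightarrow> \<not> E (xs ! i) (xs ! j))"

definition induced_edges :: "('a \<Rightarrow> 'a \<Rightarrow> bool) \<Rightarrow> 'a set \<Rightarrow> 'a \<Rightarrow> 'a \<Rightarrow> bool" where
  "induced_edges E L u v \<longleftrightarrow> u \<in> L \<and> v \<in> L \<and> E u v"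

definition is_lift ::
  "'b set \<Rightarrow> ('b \<Rightarrow> 'b \<Rightarrow> bool) \<Rightarrow> ('b \<Rightarrow> 'a) \<Rightarrow> 'a list \<Rightarrow> 'b list \<Rightarrow> bool" where
  "is_lift L EL phi xs ys \<longleftrightarrow> is_path L EL ys \<and> map phi ys = xs"

definition SIPL ::
  "'b set \<Rightarrow> ('b \<Rightarrow> 'b \<Rightarrow> bool) \<Rightarrow> 'a set \<Rightarrow> ('a \<Rightarrow> 'a \<Rightarrow> bool) \<Rightarrow> ('a \<Rightarrow> 'a \<Rightarrow> bool)
     \<Rightarrow> ('b \<Rightarrow> 'a) \<Rightarrow> 'b set \<Rightarrow> bool" where
  "SIPL L EL V E lt phi F \<longleftrightarrow>
     (\<forall>v'\<in>F. \<forall>xs. semi_induced V E lt xs \<and> hd xs = phi v' \<longrightarrow>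
        (\<exists>ys. is_lift L EL phi xs ys \<and> hd ys = v'))"

definition connected_graph :: "'a set \<Rightarrow> ('a \<Rightarrow> 'a \<Rightarrow> bool) \<Rightarrow> bool" where
  "connected_graph V E \<longleftrightarrow> (\<forall>u\<in>V. \<forall>v\<in>V. \<exists>xs. is_path V E xs \<and> hd xs = u \<and> last xs = v)"

definition strict_total_order_on :: "'a set \<Rightarrow> ('a \<Rightarrow> 'a \<Rightarrow> bool) \<Rightarrow> bool" where
  "strict_total_order_on V lt \<longleftrightarrow> (\<forall>x\<in>V. \<not> lt x x) \<and>
     (\<forall>x\<in>V. \<forall>y\<in>V. \<forall>z\<in>V. lt x y \<longrightarrow> lt y z \<longrightarrow> lt x z) \<and>
     (\<forall>x\<in>V. \<forall>y\<in>V. x \<noteq> y \<longrightarrow> lt x y \<or> lt y x)"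

end

theory Submission
  imports Defs
begin

lemma all_nat_split: "(\<forall>i::nat. P i) = (P 0 \<and> (\<forall>i. P (Suc i)))"
  by (metis nat.exhaust)

lemma path_single[simp]: "is_path V E [a] \<longleftrightarrow> a \<in> V"
  by (simp add: is_path_def)

lemma path_Cons2: "is_path V E (a # b # r) \<longleftrightarrow> a \<in> V \<and> a \<notin> set (b#r) \<and> E a b \<and> is_path V E (b # r)"
  unfolding is_path_def
  apply (subst all_nat_split)
  apply auto
  done

lemma si_single[simp]: "semi_induced V E lt [a] \<longleftrightarrow> a \<in> V"
  by (simp add: semi_induced_def)

lemma si_Cons2: "semi_induced V E lt (a#b#r) \<longleftrightarrow> is_path V E (a#b#r) \<and> (\<forall>c\<in>set r. lt c b \<longrightarrow> \<not> E a c) \<and> semi_induced V E lt (b#r)"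
proof
  assume s: "semi_induced V E lt (a#b#r)"
  then have C: "\<And>i j. j < length (a#b#r) \<Longrightarrow> i + 2 \<le> j \<Longrightarrow> lt ((a#b#r) ! j) ((a#b#r) ! Suc i) \<Longrightarrow> \<not> E ((a#b#r) ! i) ((a#b#r) ! j)"
    by (auto simp: semi_induced_def)
  have "\<forall>c\<in>set r. lt c b \<longrightarrow> \<not> E a c"
  proof (intro ballI impI)
    fix c assume "c \<in> set r" "lt c b"
    then obtain k where "k < length r" "r ! k = c" by (auto simp: in_set_conv_nth)
    then show "\<not> E a c" using C[of "Suc (Suc k)" 0] \<open>lt c b\<close> by simp
  qed
  moreover have "semi_induced V E lt (b#r)"
    unfolding semi_induced_def
  proof (intro conjI allI impI)
    show "is_path V E (b # r)" using s by (simp add: semi_induced_def path_Cons2)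
    fix i j assume "j < length (b#r)" "i + 2 \<le> j" "lt ((b # r) ! j) ((b # r) ! Suc i)"
    then show "\<not> E ((b # r) ! i) ((b # r) ! j)" using C[of "Suc j" "Suc i"] by simp
  qed
  ultimately show "is_path V E (a#b#r) \<and> (\<forall>c\<in>set r. lt c b \<longrightarrow> \<not> E a c) \<and> semi_induced V E lt (b#r)"
    using s by (simp add: semi_induced_def)
next
  assume h: "is_path V E (a#b#r) \<and> (\<forall>c\<in>set r. lt c b \<longrightarrow> \<not> E a c) \<and> semi_induced V E lt (b#r)"
  then have C: "\<And>i j. j < length (b#r) \<Longrightarrow> i + 2 \<le> j \<Longrightarrow> lt ((b#r) ! j) ((b#r) ! Suc i) \<Longrightarrow> \<not> E ((b#r) ! i) ((b#r) ! j)"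
    by (auto simp: semi_induced_def)
  show "semi_induced V E lt (a#b#r)"
    unfolding semi_induced_def
  proof (intro conjI allI impI)
    show "is_path V E (a#b#r)" using h by simp
    fix i j assume j: "j < length (a#b#r)" "i + 2 \<le> j" "lt ((a#b#r) ! j) ((a#b#r) ! Suc i)"
    show "\<not> E ((a#b#r) ! i) ((a#b#r) ! j)"
    proof (cases i)
      case 0
      define k where "k = j - 2"
      have k: "j = Suc (Suc k)" using j(2) 0 unfolding k_def by simp
      have kr: "k < length r" using j(1) k by simp
      then have rk: "r ! k \<in> set r" by simp
      have "lt (r ! k) b" using j(3) k 0 by simp
      then have "\<not> E a (r ! k)" using h rk by blast
      then show ?thesis using k 0 by simp
    next
      case (Suc i')
      define j' where "j' = j - 1"
      have "j = Suc j'" using j(2) Suc unfolding j'_def by simp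
      then show ?thesis using C[of j' i'] j Suc by auto
    qed
  qed
qed

lemma path_take: "is_path V E xs \<Longrightarrow> 0 < n \<Longrightarrow> is_path V E (take n xs)"
  unfolding is_path_def using set_take_subset[of n xs]
  by (auto simp: distinct_take)

lemma si_take: "semi_induced V E lt xs \<Longrightarrow> 0 < n \<Longrightarrow> semi_induced V E lt (take n xs)"
  unfolding semi_induced_def using path_take[of V E xs n]
  by auto

lemma si_path: "semi_induced V E lt xs \<Longrightarrow> is_path V E xs"
  by (simp add: semi_induced_def)

lemma si_unique:
  assumes "strict_total_order_on V lt"
  shows "semi_induced V E lt xs \<Longrightarrow> semi_induced V E lt ys \<Longrightarrow> hd xs = hd ys \<Longrightarrow> set xs = set ys \<Longrightarrow> xs = ys"
proof (induction xs arbitrary: ys)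
  case Nil
  then show ?case by (simp add: semi_induced_def is_path_def)
next
  case (Cons a r)
  obtain r2 where ys: "ys = a # r2"
    using Cons.prems by (cases ys) (auto simp: semi_induced_def is_path_def)
  show ?case
  proof (cases r)
    case Nil
    have "distinct ys" using Cons.prems by (simp add: semi_induced_def is_path_def)
    then have "r2 = []" using Cons.prems ys Nil by (cases r2) auto
    then show ?thesis using ys Nil by simp
  next
    case (Cons b1 r1)
    have d1: "distinct (a#r)" using Cons.prems by (simp add: semi_induced_def is_path_def)
    have d2: "distinct ys" using Cons.prems by (simp add: semi_induced_def is_path_def)
    obtain b2 s2 where r2: "r2 = b2 # s2"
      using Cons.prems ys Cons d1 d2 by (cases r2) auto
    have s1: "semi_induced V E lt (a#b1#r1)" using Cons.prems Cons by simp
    have s2: "semi_induced V E lt (a#b2#s2)" using Cons.prems ys r2 by simp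
    have seteq: "set (b1#r1) = set (b2#s2)"
      using Cons.prems ys r2 Cons d1 d2 by auto
    have "b1 = b2"
    proof (rule ccontr)
      assume ne: "b1 \<noteq> b2"
      have "b2 \<in> set r1" "b1 \<in> set s2" using seteq ne by auto
      moreover have "E a b1" "E a b2" "b1 \<in> V" "b2 \<in> V"
        using s1 s2 by (auto simp: si_Cons2 path_Cons2 is_path_def)
      ultimately have "\<not> lt b2 b1" "\<not> lt b1 b2" using s1 s2 by (auto simp: si_Cons2)
      then show False using assms ne \<open>b1 \<in> V\<close> \<open>b2 \<in> V\<close>
        unfolding strict_total_order_on_def by blast
    qed
    have "b1 # r1 = b2 # s2"
      using Cons.IH[of "b2#s2"] s1 s2 seteq \<open>b1 = b2\<close> Cons by (simp add: si_Cons2)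
    then show ?thesis using ys r2 Cons by simp
  qed
qed

lemma lift_unique:
  assumes "covering V' E' V E p"
  shows "is_path V' E' ys1 \<Longrightarrow> is_path V' E' ys2 \<Longrightarrow> hd ys1 = hd ys2 \<Longrightarrow> map p ys1 = map p ys2 \<Longrightarrow> ys1 = ys2"
proof (induction ys1 arbitrary: ys2)
  case Nil
  then show ?case by simp
next
  case (Cons a r)
  obtain r2 where ys: "ys2 = a # r2"
    using Cons.prems by (cases ys2) auto
  show ?case
  proof (cases r)
    case Nil
    then show ?thesis using Cons.prems ys by simp
  next
    case (Cons b1 r1)
    obtain b2 s2 where r2: "r2 = b2 # s2"
      using Cons.prems ys Cons by (cases r2) auto
    have p1: "is_path V' E' (a#b1#r1)" using Cons.prems Cons by simp
    have p2: "is_path V' E' (a#b2#s2)" using Cons.prems ys r2 by simp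
    have "a \<in> V'" "E' a b1" "E' a b2" using p1 p2 by (auto simp: path_Cons2)
    moreover have "p b1 = p b2" using Cons.prems ys r2 Cons by simp
    ultimately have "b1 = b2" using assms
      unfolding covering_def bij_betw_def inj_on_def neighbours_def by blast
    have "b1 # r1 = b2 # s2"
      using Cons.IH[of "b2#s2"] p1 p2 \<open>b1 = b2\<close> Cons Cons.prems ys r2 by (simp add: path_Cons2)
    then show ?thesis using ys r2 Cons by simp
  qed
qed

lemma lift_exists:
  assumes "covering V' E' V E p" "graph V' E'"
  shows "is_path V E xs \<Longrightarrow> v \<in> V' \<Longrightarrow> hd xs = p v \<Longrightarrow> \<exists>ys. is_path V' E' ys \<and> map p ys = xs \<and> hd ys = v"
proof (induction xs arbitrary: v)
  case Nil
  then show ?case by (simp add: is_path_def)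
next
  case (Cons a r)
  show ?case
  proof (cases r)
    case Nil
    then show ?thesis using Cons.prems by (intro exI[of _ "[v]"]) auto
  next
    case (Cons b r')
    have pa: "is_path V E (a#b#r')" using Cons.prems Cons by simp
    then have "E a b" by (simp add: path_Cons2)
    then have "b \<in> neighbours E (p v)" using Cons.prems by (simp add: neighbours_def)
    moreover have "bij_betw p (neighbours E' v) (neighbours E (p v))"
      using assms(1) Cons.prems(2) unfolding covering_def by blast
    then have "p ` neighbours E' v = neighbours E (p v)"
      by (rule bij_betw_imp_surj_on)
    ultimately have "b \<in> p ` neighbours E' v" by simp
    then obtain w where "w \<in> neighbours E' v" "p w = b" by blast
    then have w: "E' v w" "p w = b" by (auto simp: neighbours_def)
    have "w \<in> V'" using w assms(2) by (auto simp: graph_def)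
    have "is_path V E r" using pa Cons by (simp add: path_Cons2)
    moreover have "hd r = p w" using w Cons by simp
    ultimately obtain ys' where ys0: "is_path V' E' ys'" "map p ys' = r" "hd ys' = w"
      using Cons.IH[of w] \<open>w \<in> V'\<close> by meson
    then have ys': "is_path V' E' ys'" "map p ys' = b # r'" "hd ys' = w" using Cons by simp_all
    obtain zs where zs: "ys' = w # zs" using ys' by (cases ys') auto
    have "map p (v # ys') = a # b # r'" using ys' Cons.prems(3) by simp
    then have "distinct (map p (v # ys'))" using pa by (simp only: is_path_def)
    then have "distinct (v # ys')" using distinct_map by blast
    then have "is_path V' E' (v # w # zs)" using ys' zs w Cons.prems by (simp add: path_Cons2)
    then show ?thesis using ys' zs Cons.prems Cons by (intro exI[of _ "v # w # zs"]) simp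
  qed
qed

lemma card_sets_containing:
  assumes "finite V" "x \<in> V"
  shows "card {S. S \<subseteq> V \<and> x \<in> S} = 2 ^ (card V - 1)"
proof -
  have eq: "{S. S \<subseteq> V \<and> x \<in> S} = insert x ` Pow (V - {x})"
  proof
    show "{S. S \<subseteq> V \<and> x \<in> S} \<subseteq> insert x ` Pow (V - {x})"
    proof
      fix S assume "S \<in> {S. S \<subseteq> V \<and> x \<in> S}"
      then have "S = insert x (S - {x})" "S - {x} \<in> Pow (V - {x})" by auto
      then show "S \<in> insert x ` Pow (V - {x})" by blast
    qed
  qed (use assms in auto)
  have inj: "inj_on (insert x) (Pow (V - {x}))"
    unfolding inj_on_def by blast
  have "card {S. S \<subseteq> V \<and> x \<in> S} = card (Pow (V - {x}))"
    using eq card_image[OF inj] by simp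
  also have "\<dots> = 2 ^ (card V - 1)"
    using assms by (simp add: card_Pow)
  finally show ?thesis .
qed

lemma path_rtranclp: "is_path V E xs \<Longrightarrow> E\<^sup>*\<^sup>* (hd xs) (last xs)"
proof (induction xs)
  case Nil
  then show ?case by (simp add: is_path_def)
next
  case (Cons a r)
  show ?case
  proof (cases r)
    case Nil
    then show ?thesis by simp
  next
    case (Cons b r')
    then have "E a b" "is_path V E r" using Cons.prems by (auto simp: path_Cons2)
    then show ?thesis using Cons.IH Cons
      by (auto intro: converse_rtranclp_into_rtranclp)
  qed
qed

lemma rtranclp_path:
  assumes "\<forall>u v. E u v \<longrightarrow> u \<in> V \<and> v \<in> V" "u \<in> V"
  shows "E\<^sup>*\<^sup>* u v \<Longrightarrow> \<exists>xs. is_path V E xs \<and> hd xs = u \<and> last xs = v"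
proof (induction rule: rtranclp_induct)
  case base
  then show ?case using assms by (intro exI[of _ "[u]"]) simp
next
  case (step w v)
  then obtain xs where xs: "is_path V E xs" "hd xs = u" "last xs = w" by blast
  have ne: "xs \<noteq> []" using xs by (simp add: is_path_def)
  show ?case
  proof (cases "v \<in> set xs")
    case True
    then obtain k where k: "k < length xs" "xs ! k = v" by (auto simp: in_set_conv_nth)
    have "is_path V E (take (Suc k) xs)" using path_take xs by blast
    moreover have "hd (take (Suc k) xs) = u" using xs ne by simp
    moreover have "last (take (Suc k) xs) = v" using k
      by (simp add: take_Suc_conv_app_nth)
    ultimately show ?thesis by blast
  next
    case False
    have "is_path V E (xs @ [v])"
      unfolding is_path_def
    proof (intro conjI allI impI)
      show "xs @ [v] \<noteq> []" by simp
      show "set (xs @ [v]) \<subseteq> V" using xs step assms by (auto simp: is_path_def)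
      show "distinct (xs @ [v])" using xs False by (simp add: is_path_def)
      fix i assume i: "Suc i < length (xs @ [v])"
      show "E ((xs @ [v]) ! i) ((xs @ [v]) ! Suc i)"
      proof (cases "Suc i < length xs")
        case True
        then show ?thesis using xs by (simp add: nth_append is_path_def)
      next
        case False
        then have "i = length xs - 1" using i by simp
        then show ?thesis using step xs ne False
          by (simp add: nth_append last_conv_nth)
      qed
    qed
    then show ?thesis using xs ne by (intro exI[of _ "xs @ [v]"]) simp
  qed
qed

lemma rtranclp_sym: assumes "\<And>a b. R a b \<Longrightarrow> R b a" shows "R\<^sup>*\<^sup>* u v \<Longrightarrow> R\<^sup>*\<^sup>* v u"
proof (induction rule: rtranclp_induct)
  case base then show ?case by simp
next
  case (step y z)
  then show ?case using assms by (metis converse_rtranclp_into_rtranclp)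
qed

theorem proposition3p10:
  fixes V :: "'a set" and E :: "'a \<Rightarrow> 'a \<Rightarrow> bool" and lt :: "'a \<Rightarrow> 'a \<Rightarrow> bool"
    and V' :: "'b set" and E' :: "'b \<Rightarrow> 'b \<Rightarrow> bool" and p :: "'b \<Rightarrow> 'a"
    and F :: "'b set" and m :: nat
  assumes "graph V E" and "finite V" and "card V = m"
    and "strict_total_order_on V lt"
    and "graph V' E'" and "covering V' E' V E p"
    and "finite F" and "F \<noteq> {}" and "F \<subseteq> V'"
  shows "\<exists>L. L \<subseteq> V' \<and> finite L \<and> card L \<le> card F * 2 ^ (m - 1) \<and>
             SIPL L (induced_edges E' L) V E lt p F \<and>
             (connected_graph F (induced_edges E' F) \<longrightarrow> connected_graph L (induced_edges E' L))"
proof -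
  define Lift where "Lift v = {ys. is_path V' E' ys \<and> hd ys = v \<and> semi_induced V E lt (map p ys)}" for v
  define L where "L = (\<Union>v\<in>F. last ` Lift v)"
  have pV: "p v \<in> V" if "v \<in> V'" for v
    using assms(6) that unfolding covering_def by blast
  have LV: "L \<subseteq> V'"
    unfolding L_def Lift_def is_path_def by auto
  have setL: "set ys \<subseteq> L" if v: "v \<in> F" and ys: "ys \<in> Lift v" for v ys
  proof
    fix x assume "x \<in> set ys"
    then obtain k where k: "k < length ys" "ys ! k = x" by (auto simp: in_set_conv_nth)
    have ne: "ys \<noteq> []" using k by auto
    have "take (Suc k) ys \<in> Lift v"
      using ys ne path_take[of V' E' ys "Suc k"] si_take[of V E lt "map p ys" "Suc k"]
      by (simp add: Lift_def take_map)
    moreover have "last (take (Suc k) ys) = x" using k by (simp add: take_Suc_conv_app_nth)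
    ultimately show "x \<in> L" using v unfolding L_def by blast
  qed
  have pathL: "is_path L (induced_edges E' L) ys" if v: "v \<in> F" and ys: "ys \<in> Lift v" for v ys
    using setL[OF v ys] ys unfolding Lift_def is_path_def induced_edges_def
    by (auto simp: subset_iff)
  have FL: "F \<subseteq> L"
  proof
    fix v assume v: "v \<in> F"
    then have "[v] \<in> Lift v" using assms(9) pV by (auto simp: Lift_def)
    then show "v \<in> L" using v unfolding L_def by force
  qed
  have sipl: "SIPL L (induced_edges E' L) V E lt p F"
    unfolding SIPL_def
  proof (intro ballI allI impI)
    fix v xs assume v: "v \<in> F" and xs: "semi_induced V E lt xs \<and> hd xs = p v"
    obtain ys where ys: "is_path V' E' ys" "map p ys = xs" "hd ys = v"
      using lift_exists[OF assms(6) assms(5)] xs v assms(9) si_path by blast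
    have "ys \<in> Lift v" using ys xs by (simp add: Lift_def)
    then show "\<exists>ys. is_lift L (induced_edges E' L) p xs ys \<and> hd ys = v"
      using pathL[OF v] ys by (auto simp: is_lift_def)
  qed
  have cardLift: "finite (Lift v) \<and> card (Lift v) \<le> 2 ^ (m - 1)" if v: "v \<in> F" for v
  proof -
    let ?g = "\<lambda>ys. set (map p ys)"
    have inj: "inj_on ?g (Lift v)"
    proof (rule inj_onI)
      fix ys1 ys2 assume a: "ys1 \<in> Lift v" "ys2 \<in> Lift v" "?g ys1 = ?g ys2"
      have ne: "ys1 \<noteq> []" "ys2 \<noteq> []" using a by (auto simp: Lift_def is_path_def)
      have "map p ys1 = map p ys2"
        using si_unique[OF assms(4)] a ne by (auto simp: Lift_def hd_map)
      then show "ys1 = ys2" using lift_unique[OF assms(6)] a by (auto simp: Lift_def)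
    qed
    have sub: "?g ` Lift v \<subseteq> {S. S \<subseteq> V \<and> p v \<in> S}"
    proof
      fix S assume "S \<in> ?g ` Lift v"
      then obtain ys where ys: "ys \<in> Lift v" "S = ?g ys" by blast
      have "ys \<noteq> []" using ys by (auto simp: Lift_def is_path_def)
      then have "hd ys \<in> set ys" by simp
      then have "p (hd ys) \<in> S" using ys by simp
      then have "p v \<in> S" using ys by (simp add: Lift_def)
      moreover have "S \<subseteq> V" using ys by (auto simp: Lift_def semi_induced_def is_path_def)
      ultimately show "S \<in> {S. S \<subseteq> V \<and> p v \<in> S}" by blast
    qed
    have fin: "finite {S. S \<subseteq> V \<and> p v \<in> S}" using assms(2) by simp
    have "finite (Lift v)" using finite_imageD[OF finite_subset[OF sub fin] inj] .
    moreover have "card (Lift v) \<le> 2 ^ (m - 1)"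
    proof -
      have "card (Lift v) = card (?g ` Lift v)" using card_image[OF inj] by simp
      also have "\<dots> \<le> card {S. S \<subseteq> V \<and> p v \<in> S}" using card_mono[OF fin sub] .
      also have "\<dots> = 2 ^ (m - 1)"
        using card_sets_containing[OF assms(2) pV] v assms(9) assms(3) by auto
      finally show ?thesis .
    qed
    ultimately show ?thesis by blast
  qed
  have finL: "finite L" unfolding L_def using assms(7) cardLift by auto
  have "card L \<le> (\<Sum>v\<in>F. card (last ` Lift v))"
    unfolding L_def by (rule card_UN_le[OF assms(7)])
  also have "\<dots> \<le> (\<Sum>v\<in>F. 2 ^ (m - 1))"
  proof (rule sum_mono)
    fix v assume "v \<in> F"
    then show "card (last ` Lift v) \<le> 2 ^ (m - 1)"
      using cardLift card_image_le le_trans by blast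
  qed
  also have "\<dots> = card F * 2 ^ (m - 1)" by simp
  finally have cardL: "card L \<le> card F * 2 ^ (m - 1)" .
  have conn: "connected_graph L (induced_edges E' L)" if cF: "connected_graph F (induced_edges E' F)"
  proof -
    let ?R = "induced_edges E' L"
    have symR: "?R b a" if "?R a b" for a b
      using that assms(5) by (auto simp: induced_edges_def graph_def)
    have reach: "\<exists>v\<in>F. ?R\<^sup>*\<^sup>* v u" if "u \<in> L" for u
    proof -
      from that obtain v ys where v: "v \<in> F" "ys \<in> Lift v" "u = last ys"
        unfolding L_def by blast
      have "?R\<^sup>*\<^sup>* (hd ys) (last ys)" by (rule path_rtranclp[OF pathL[OF v(1,2)]])
      then show ?thesis using v by (auto simp: Lift_def)
    qed
    have Freach: "?R\<^sup>*\<^sup>* a b" if ab: "a \<in> F" "b \<in> F" for a b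
    proof -
      obtain zs where zs: "is_path F (induced_edges E' F) zs" "hd zs = a" "last zs = b"
        using cF[unfolded connected_graph_def, rule_format, OF ab] by blast
      have "(induced_edges E' F)\<^sup>*\<^sup>* a b" using path_rtranclp[OF zs(1)] zs by simp
      have "induced_edges E' F \<le> ?R" using FL by (auto simp: induced_edges_def)
      then have "(induced_edges E' F)\<^sup>*\<^sup>* \<le> ?R\<^sup>*\<^sup>*" by (rule rtranclp_mono)
      then show ?thesis using \<open>(induced_edges E' F)\<^sup>*\<^sup>* a b\<close> by (rule predicate2D)
    qed
    show ?thesis
      unfolding connected_graph_def
    proof (intro ballI)
      fix u w assume u: "u \<in> L" and w: "w \<in> L"
      obtain v1 where v1: "v1 \<in> F" "?R\<^sup>*\<^sup>* v1 u" using reach[OF u] by blast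
      obtain v2 where v2: "v2 \<in> F" "?R\<^sup>*\<^sup>* v2 w" using reach[OF w] by blast
      have "?R\<^sup>*\<^sup>* u v1" by (rule rtranclp_sym[of ?R, OF symR v1(2)])
      then have uw: "?R\<^sup>*\<^sup>* u w" using Freach[OF v1(1) v2(1)] v2(2) by (meson rtranclp_trans)
      have RL: "\<forall>a b. ?R a b \<longrightarrow> a \<in> L \<and> b \<in> L" by (simp add: induced_edges_def)
      show "\<exists>xs. is_path L ?R xs \<and> hd xs = u \<and> last xs = w"
        using rtranclp_path[of ?R L u w, OF RL u uw] .
    qed
  qed
  show ?thesis
    apply (rule exI[of _ L])
    using LV finL cardL sipl conn by simp
qed

end
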